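(* For $k=0,\dots,7$ let $v_k=(\cos(k\pi/4),\sin(k\pi/4))$ (indices mod 8), let $E_k$ be the segment $[v_k,v_{k+1}]$, and let $a_k=1.4\,(\cos((2k+1)\pi/8),\sin((2k+1)\pi/8))$. For $S\subset\{0,\dots,7\}$ let $C_S$ be the closed polygonal curve obtained from the boundary of the regular octagon $v_0v_1\cdots v_7$ by replacing each edge $E_k$ with $k\in S$ by the two segments $[v_k,a_k]\cup[a_k,v_{k+1}]$ (i.e., appending to the octagon congruent isosceles triangles on the edges indexed by $S$). Let $X=C_{\{0,4,5,7\}}$ and $Y=C_{\{0,1,4,7\}}$, each regarded as an mm-space $\mathcal{X},\mathcal{Y}$ with extrinsic Euclidean distance and normalized arclength measure. Then $X$ and $Y$ are not related by any rigid motion of $\mathbb{R}^2$ (so $\mathcal{X}\not\approx\mathcal{Y}$), but $H_{\mathcal{X}}=H_{\mathcal{Y}}$.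
   Context: For an mm-space $\mathcal{X}=(X,d_X,\mu_X)$ (compact metric space with fully supported Borel probability measure), the global distance distribution is $H_{\mathcal{X}}(r)=\mu_X\otimes\mu_X(\{(x,x')\in X\times X: d_X(x,x')\le r\})$ for $r\geq0$. A plane curve is regarded as an mm-space with the restriction of the Euclidean distance of $\mathbb{R}^2$ and arclength measure normalized to total mass one. *)

theory Defs
  imports "HOL-Analysis.Analysis" "HOL-Probability.Probability"
begin

text \<open>The plane R^2 is modelled by the type complex (Euclidean distance = dist).\<close>

definition octv :: "nat \<Rightarrow> complex" where
  "octv k = cis (real k * pi / 4)"

definition apex :: "nat \<Rightarrow> complex" where
  "apex k = complex_of_real 1.4 * cis ((2 * real k + 1) * pi / 8)"

definition curve_vertices :: "nat set \<Rightarrow> complex list" where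
  "curve_vertices S = concat (map (\<lambda>k. if k \<in> S then [octv k, apex k] else [octv k]) [0..<8])"

definition poly_pt :: "complex list \<Rightarrow> real \<Rightarrow> complex" where
  "poly_pt P s = (let m = length P; i = nat \<lfloor>s\<rfloor>; t = s - of_int \<lfloor>s\<rfloor>
     in (1 - t) *\<^sub>R P ! (i mod m) + t *\<^sub>R P ! ((i + 1) mod m))"

definition poly_set :: "complex list \<Rightarrow> complex set" where
  "poly_set P = poly_pt P ` {0 .. real (length P)}"

definition edge_len :: "complex list \<Rightarrow> nat \<Rightarrow> real" where
  "edge_len P i = dist (P ! (i mod length P)) (P ! ((i + 1) mod length P))"

definition poly_len :: "complex list \<Rightarrow> real" where
  "poly_len P = (\<Sum>i<length P. edge_len P i)"

text \<open>Normalized arclength measure on the polygon: push-forward of |gamma'(s)| ds / length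
  under the parametrisation (|gamma'(s)| = length of the current edge).\<close>
definition arclen_measure :: "complex list \<Rightarrow> complex measure" where
  "arclen_measure P = distr
     (density lborel (\<lambda>s. ennreal (indicator {0..<real (length P)} s
                                     * edge_len P (nat \<lfloor>s\<rfloor>) / poly_len P)))
     borel (poly_pt P)"

definition dist_distr :: "complex measure \<Rightarrow> real \<Rightarrow> real" where
  "dist_distr \<mu> r = measure (\<mu> \<Otimes>\<^sub>M \<mu>) {(x, y). dist x y \<le> r}"

end

theory Submission
  imports Defs
begin

lemma edge_len_nonneg: "edge_len P i \<ge> 0" by (simp add: edge_len_def)

lemma nat_floor_meas[measurable]: "(\<lambda>x::real. nat \<lfloor>x\<rfloor>) \<in> borel \<rightarrow>\<^sub>M count_space UNIV"
  by (rule measurable_compose[OF measurable_real_floor]) simp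

lemma edge_len_meas[measurable]: "(\<lambda>s::real. edge_len P (nat \<lfloor>s\<rfloor>)) \<in> borel_measurable borel"
  by (rule measurable_compose_countable'[where I=UNIV, of "\<lambda>i s. edge_len P i"]) (auto intro: nat_floor_meas)

lemma split_pointwise:
  fixes h :: "real \<Rightarrow> ennreal"
  shows "ennreal (indicator {0..<real (length P)} s * edge_len P (nat \<lfloor>s\<rfloor>) / L) * h s
     = (\<Sum>i<length P. ennreal (edge_len P i / L) * (indicator {real i..<real i + 1} s * h s))"
proof (cases "s \<in> {0..<real (length P)}")
  case True
  define k where "k = nat \<lfloor>s\<rfloor>"
  have k: "k < length P" "real k \<le> s" "s < real k + 1" using True
    by (auto simp: k_def) (linarith+)
  have "\<And>i. indicator {real i..<real i + 1} s = (if i = k then 1 else (0::ennreal))"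
    using k by (auto simp: indicator_def k_def) linarith+
  then have "(\<Sum>i<length P. ennreal (edge_len P i / L) * (indicator {real i..<real i + 1} s * h s))
      = (\<Sum>i<length P. if i = k then ennreal (edge_len P i / L) * h s else 0)"
    by (intro sum.cong) auto
  also have "\<dots> = ennreal (edge_len P k / L) * h s" using k by simp
  finally show ?thesis using True by (simp add: k_def)
next
  case False
  have "\<And>i. i < length P \<Longrightarrow> indicator {real i..<real i + 1} s = (0::ennreal)"
    using False by (auto simp: indicator_def)
  then show ?thesis using False by simp
qed

lemma split_integral:
  fixes h :: "real \<Rightarrow> ennreal"
  assumes [measurable]: "h \<in> borel_measurable borel"
  shows "(\<integral>\<^sup>+ s. ennreal (indicator {0..<real (length P)} s * edge_len P (nat \<lfloor>s\<rfloor>) / L) * h s \<partial>lborel)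
     = (\<Sum>i<length P. ennreal (edge_len P i / L) * (\<integral>\<^sup>+ u. indicator {0..<1} u * h (u + real i) \<partial>lborel))"
proof -
  have "(\<integral>\<^sup>+ s. ennreal (indicator {0..<real (length P)} s * edge_len P (nat \<lfloor>s\<rfloor>) / L) * h s \<partial>lborel)
     = (\<integral>\<^sup>+ s. (\<Sum>i<length P. ennreal (edge_len P i / L) * (indicator {real i..<real i + 1} s * h s)) \<partial>lborel)"
    by (simp add: split_pointwise)
  also have "\<dots> = (\<Sum>i<length P. \<integral>\<^sup>+ s. ennreal (edge_len P i / L) * (indicator {real i..<real i + 1} s * h s) \<partial>lborel)"
    by (rule nn_integral_sum) auto
  also have "\<dots> = (\<Sum>i<length P. ennreal (edge_len P i / L) * (\<integral>\<^sup>+ u. indicator {0..<1} u * h (u + real i) \<partial>lborel))"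
  proof (rule sum.cong[OF refl])
    fix i
    have "(\<integral>\<^sup>+ s. indicator {real i..<real i + 1} s * h s \<partial>lborel)
       = (\<integral>\<^sup>+ u. indicator {real i..<real i + 1} (real i + 1 * u) * h (real i + 1 * u) \<partial>lborel)"
      using nn_integral_real_affine[where c=1 and t="real i" and f="\<lambda>s. indicator {real i..<real i + 1} s * h s"] by simp
    also have "\<dots> = (\<integral>\<^sup>+ u. indicator {0..<1} u * h (u + real i) \<partial>lborel)"
      by (intro nn_integral_cong) (auto simp: indicator_def add.commute)
    finally show "(\<integral>\<^sup>+ s. ennreal (edge_len P i / L) * (indicator {real i..<real i + 1} s * h s) \<partial>lborel)
      = ennreal (edge_len P i / L) * (\<integral>\<^sup>+ u. indicator {0..<1} u * h (u + real i) \<partial>lborel)"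
      by (subst nn_integral_cmult) auto
  qed
  finally show ?thesis .
qed


definition seg :: "complex \<Rightarrow> complex \<Rightarrow> real \<Rightarrow> complex" where
  "seg p q u = (1 - u) *\<^sub>R p + u *\<^sub>R q"

lemma seg_meas[measurable]: "seg p q \<in> borel_measurable borel"
  unfolding seg_def by measurable

lemma poly_pt_shift:
  assumes "u \<in> {0..<1}"
  shows "poly_pt P (u + real i) = seg (P ! (i mod length P)) (P ! ((i+1) mod length P)) u"
proof -
  have f: "\<lfloor>u + real i\<rfloor> = int i" using assms by (simp add: floor_eq_iff)
  show ?thesis unfolding poly_pt_def seg_def Let_def f by simp
qed

lemma poly_pt_meas[measurable]: "poly_pt P \<in> borel_measurable borel"
proof -
  let ?F = "\<lambda>i s. (1 - (s - of_int \<lfloor>s\<rfloor>)) *\<^sub>R P ! (i mod length P) + (s - of_int \<lfloor>s\<rfloor>) *\<^sub>R P ! ((i + 1) mod length P)"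
  have "(\<lambda>s::real. ?F (nat \<lfloor>s\<rfloor>) s) \<in> borel_measurable borel"
    by (rule measurable_compose_countable'[where I=UNIV]) (auto intro: nat_floor_meas)
  moreover have "poly_pt P = (\<lambda>s. ?F (nat \<lfloor>s\<rfloor>) s)"
    by (auto simp: poly_pt_def Let_def fun_eq_iff)
  ultimately show ?thesis by simp
qed

abbreviation "sP P i \<equiv> seg (P ! (i mod length P)) (P ! ((i+1) mod length P))"

lemma sets_arclen[simp, measurable_cong]: "sets (arclen_measure P) = sets borel"
  by (simp add: arclen_measure_def)

lemma space_arclen[simp]: "space (arclen_measure P) = UNIV"
  by (simp add: arclen_measure_def)

lemma integral_arclen:
  fixes F :: "complex \<Rightarrow> ennreal"
  assumes [measurable]: "F \<in> borel_measurable borel"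
  shows "(\<integral>\<^sup>+ x. F x \<partial>arclen_measure P)
     = (\<Sum>i<length P. ennreal (edge_len P i / poly_len P) * (\<integral>\<^sup>+ u. indicator {0..<1} u * F (sP P i u) \<partial>lborel))"
proof -
  have "(\<integral>\<^sup>+ x. F x \<partial>arclen_measure P)
     = (\<integral>\<^sup>+ s. ennreal (indicator {0..<real (length P)} s * edge_len P (nat \<lfloor>s\<rfloor>) / poly_len P) * F (poly_pt P s) \<partial>lborel)"
    unfolding arclen_measure_def
    by (subst nn_integral_distr) (auto simp: nn_integral_density)
  also have "\<dots> = (\<Sum>i<length P. ennreal (edge_len P i / poly_len P) * (\<integral>\<^sup>+ u. indicator {0..<1} u * F (poly_pt P (u + real i)) \<partial>lborel))"
    by (rule split_integral) measurable
  also have "\<dots> = (\<Sum>i<length P. ennreal (edge_len P i / poly_len P) * (\<integral>\<^sup>+ u. indicator {0..<1} u * F (sP P i u) \<partial>lborel))"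
  proof -
    have eq: "\<And>i u. indicator {0..<1} u * F (poly_pt P (u + real i)) = indicator {0..<1} u * F (sP P i u)"
      by (case_tac "u \<in> {0..<1}") (simp_all add: poly_pt_shift)
    show ?thesis by (simp only: eq)
  qed
  finally show ?thesis .
qed

lemma finite_arclen: "finite_measure (arclen_measure P)"
proof (rule finite_measureI)
  have "emeasure (arclen_measure P) (space (arclen_measure P)) = (\<integral>\<^sup>+ x. 1 \<partial>arclen_measure P)"
    by simp
  also have "\<dots> = (\<Sum>i<length P. ennreal (edge_len P i / poly_len P))"
    using integral_arclen[of "\<lambda>_. 1" P] by simp
  finally show "emeasure (arclen_measure P) (space (arclen_measure P)) \<noteq> \<infinity>" by simp
qed

definition Qd :: "real \<Rightarrow> complex \<Rightarrow> complex \<Rightarrow> complex \<Rightarrow> complex \<Rightarrow> ennreal" where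
  "Qd r p q p' q' = (\<integral>\<^sup>+ v. indicator {0..<1} v * (\<integral>\<^sup>+ u. indicator {0..<1} u *
       (if dist (seg p q v) (seg p' q' u) \<le> r then 1 else 0) \<partial>lborel) \<partial>lborel)"

lemma main_formula:
  "emeasure (arclen_measure P \<Otimes>\<^sub>M arclen_measure P) {(x, y). dist x y \<le> r}
   = (\<Sum>i<length P. \<Sum>j<length P. ennreal (edge_len P i / poly_len P) * ennreal (edge_len P j / poly_len P)
        * Qd r (P ! (i mod length P)) (P ! ((i+1) mod length P)) (P ! (j mod length P)) (P ! ((j+1) mod length P)))"
proof -
  let ?M = "arclen_measure P"
  let ?D = "{(x::complex, y::complex). dist x y \<le> r}"
  let ?c = "\<lambda>i. ennreal (edge_len P i / poly_len P)"
  interpret finite_measure ?M by (rule finite_arclen)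
  have D: "?D \<in> sets (?M \<Otimes>\<^sub>M ?M)"
  proof -
    have "?D = {z \<in> space (borel \<Otimes>\<^sub>M borel). dist (fst z) (snd z) \<le> r}"
      by (auto simp: space_pair_measure)
    also have "\<dots> \<in> sets (borel \<Otimes>\<^sub>M borel)" by measurable
    finally show ?thesis by (simp cong: sets_pair_measure_cong)
  qed
  have sec: "emeasure ?M (Pair x -` ?D) = (\<Sum>j<length P. ?c j * (\<integral>\<^sup>+ u. indicator {0..<1} u *
       (if dist x (sP P j u) \<le> r then 1 else 0) \<partial>lborel))" for x
  proof -
    have "emeasure ?M (Pair x -` ?D) = (\<integral>\<^sup>+ y. (if dist x y \<le> r then 1 else 0) \<partial>?M)"
    proof -
      have m: "{y. dist x y \<le> r} \<in> sets borel" by measurable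
      have "(\<integral>\<^sup>+ y. (if dist x y \<le> r then 1 else 0) \<partial>?M) = (\<integral>\<^sup>+ y. indicator {y. dist x y \<le> r} y \<partial>?M)"
        by (intro nn_integral_cong) (simp add: indicator_def)
      also have "\<dots> = emeasure ?M {y. dist x y \<le> r}" using m by (simp add: nn_integral_indicator)
      finally show ?thesis by (simp add: vimage_def)
    qed
    also have "\<dots> = (\<Sum>j<length P. ?c j * (\<integral>\<^sup>+ u. indicator {0..<1} u *
       (if dist x (sP P j u) \<le> r then 1 else 0) \<partial>lborel))"
      by (rule integral_arclen) measurable
    finally show ?thesis .
  qed
  have mE: "(\<lambda>x. emeasure ?M (Pair x -` ?D)) \<in> borel_measurable borel"
    using measurable_emeasure_Pair[OF D] by (simp cong: measurable_cong_sets)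
  have "emeasure (?M \<Otimes>\<^sub>M ?M) ?D = (\<integral>\<^sup>+ x. emeasure ?M (Pair x -` ?D) \<partial>?M)"
    by (rule emeasure_pair_measure_alt[OF D])
  also have "\<dots> = (\<Sum>i<length P. ?c i * (\<integral>\<^sup>+ v. indicator {0..<1} v * emeasure ?M (Pair (sP P i v) -` ?D) \<partial>lborel))"
    by (rule integral_arclen[OF mE])
  also have "\<dots> = (\<Sum>i<length P. ?c i * (\<integral>\<^sup>+ v. (\<Sum>j<length P. ?c j * (indicator {0..<1} v * (\<integral>\<^sup>+ u. indicator {0..<1} u *
       (if dist (sP P i v) (sP P j u) \<le> r then 1 else 0) \<partial>lborel))) \<partial>lborel))"
    by (intro sum.cong refl arg_cong2[where f="(*)"] nn_integral_cong) (simp only: sec sum_distrib_left mult.left_commute)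
  also have "\<dots> = (\<Sum>i<length P. ?c i * (\<Sum>j<length P. ?c j * (\<integral>\<^sup>+ v. indicator {0..<1} v * (\<integral>\<^sup>+ u. indicator {0..<1} u *
       (if dist (sP P i v) (sP P j u) \<le> r then 1 else 0) \<partial>lborel) \<partial>lborel)))"
    by (subst nn_integral_sum) (auto simp: nn_integral_cmult)
  also have "\<dots> = (\<Sum>i<length P. \<Sum>j<length P. ?c i * ?c j
        * Qd r (P ! (i mod length P)) (P ! ((i+1) mod length P)) (P ! (j mod length P)) (P ! ((j+1) mod length P)))"
    by (simp add: Qd_def sum_distrib_left mult_ac)
  finally show ?thesis .
qed


definition edges :: "complex list \<Rightarrow> (complex \<times> complex) list" where
  "edges P = map (\<lambda>i. (P ! (i mod length P), P ! ((i+1) mod length P))) [0..<length P]"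

definition E :: "nat set \<Rightarrow> nat \<Rightarrow> (complex \<times> complex) list" where
  "E S k = (if k \<in> S then [(octv k, apex k), (apex k, octv ((k+1) mod 8))] else [(octv k, octv ((k+1) mod 8))])"

lemma u8: "[0..<8] = [0,1,2,3,4,5,6,7::nat]" by code_simp
lemma u12: "[0..<12] = [0,1,2,3,4,5,6,7,8,9,10,11::nat]" by code_simp

lemma edges1: "edges (curve_vertices {0,4,5,7}) = concat (map (E {0,4,5,7}) [0..<8])"
  by (simp add: edges_def curve_vertices_def E_def u8 u12 numeral_2_eq_2) (simp add: eval_nat_numeral)

lemma edges2: "edges (curve_vertices {0,1,4,7}) = concat (map (E {0,1,4,7}) [0..<8])"
  by (simp add: edges_def curve_vertices_def E_def u8 u12 numeral_2_eq_2) (simp add: eval_nat_numeral)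

lemma XX: "(\<Sum>k<8. \<Sum>l<8. (G::bool\<Rightarrow>bool\<Rightarrow>nat\<Rightarrow>ennreal) (k\<in>{0,4,5,7}) (l\<in>{0,4,5,7}) ((l+8-k) mod 8))
     = (\<Sum>k<8. \<Sum>l<8. G (k\<in>{0,1,4,7}) (l\<in>{0,1,4,7}) ((l+8-k) mod 8))"
  by (simp add: lessThan_nat_numeral ac_simps)


definition om :: complex where "om = cis (pi/4)"

lemma octv_pow: "octv k = om ^ k"
  by (simp add: octv_def om_def Complex.DeMoivre)

lemma om8: "om ^ 8 = 1"
proof -
  have "om ^ 8 = cis (real 8 * (pi/4))" by (simp add: om_def Complex.DeMoivre)
  also have "real 8 * (pi/4) = 2 * pi" by simp
  finally show ?thesis by simp
qed

lemma om_mod: "om ^ (n mod 8) = om ^ n"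
proof -
  have "om ^ n = om ^ (8 * (n div 8) + n mod 8)" by simp
  also have "\<dots> = (om ^ 8) ^ (n div 8) * om ^ (n mod 8)" by (simp only: power_add power_mult)
  finally show ?thesis by (simp add: om8)
qed

lemma norm_om [simp]: "norm (om ^ k) = 1"
  by (simp add: om_def norm_power)

lemma apex_rot: "apex k = om ^ k * apex 0"
proof -
  have "cis ((2 * real k + 1) * pi / 8) = cis (real k * (pi/4)) * cis (pi / 8)"
    by (simp add: cis_mult algebra_simps add_divide_distrib)
  then show ?thesis by (simp add: apex_def om_def Complex.DeMoivre)
qed

definition rp :: "complex \<Rightarrow> complex \<times> complex \<Rightarrow> complex \<times> complex" where
  "rp c e = (c * fst e, c * snd e)"

definition E0 :: "bool \<Rightarrow> (complex \<times> complex) list" where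
  "E0 b = (if b then [(1, apex 0), (apex 0, om)] else [(1, om)])"

lemma E_rot: "E S k = map (rp (om ^ k)) (E0 (k \<in> S))"
proof -
  have "octv ((k+1) mod 8) = om ^ k * om" by (simp add: octv_pow om_mod)
  then show ?thesis by (simp add: E_def E0_def rp_def octv_pow apex_rot[of k])
qed

definition Phi :: "real \<Rightarrow> real \<Rightarrow> complex \<times> complex \<Rightarrow> complex \<times> complex \<Rightarrow> ennreal" where
  "Phi L r e e' = ennreal (dist (fst e) (snd e) / L) * ennreal (dist (fst e') (snd e') / L)
     * Qd r (fst e) (snd e) (fst e') (snd e')"

lemma dist_rot: "norm (c::complex) = 1 \<Longrightarrow> dist (c * p) (c * q) = dist p q"
proof -
  assume "norm c = 1"
  have "c * p - c * q = c * (p - q)" by (rule right_diff_distrib[symmetric])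
  then show ?thesis using \<open>norm c = 1\<close> by (simp add: dist_norm norm_mult)
qed

lemma seg_rot: "seg (c * p) (c * q) v = c * seg p q v"
  by (simp add: seg_def scaleR_conv_of_real algebra_simps)

lemma Phi_rot: "norm c = 1 \<Longrightarrow> Phi L r (rp c e) (rp c e') = Phi L r e e'"
  by (simp add: Phi_def rp_def Qd_def seg_rot dist_rot)

definition Gs where
  "Gs L r S k l = sum_list (map (\<lambda>e. sum_list (map (Phi L r e) (E S l))) (E S k))"

definition G0 where
  "G0 L r a b d = sum_list (map (\<lambda>e. sum_list (map (Phi L r e) (map (rp (om ^ d)) (E0 b)))) (E0 a))"

lemma Gs_rot:
  assumes "k < 8" "l < 8"
  shows "Gs L r S k l = G0 L r (k \<in> S) (l \<in> S) ((l + 8 - k) mod 8)"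
proof -
  define d where "d = (l + 8 - k) mod 8"
  have "(k + d) mod 8 = (k + (l + 8 - k)) mod 8" unfolding d_def by (simp add: mod_add_right_eq)
  also have "k + (l + 8 - k) = l + 8" using assms by simp
  finally have kd: "(k + d) mod 8 = l" using assms by simp
  have "om ^ k * om ^ d = om ^ ((k + d) mod 8)" by (simp add: om_mod power_add)
  then have "om ^ k * om ^ d = om ^ l" using kd by simp
  then have rr: "rp (om ^ l) = rp (om ^ k) \<circ> rp (om ^ d)"
    by (auto simp: rp_def fun_eq_iff mult.assoc[symmetric])
  have "Gs L r S k l = sum_list (map (\<lambda>e. sum_list (map (Phi L r e) (map (rp (om ^ k)) (map (rp (om ^ d)) (E0 (l \<in> S)))))) (map (rp (om ^ k)) (E0 (k \<in> S))))"
    by (simp add: Gs_def E_rot rr)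
  also have "\<dots> = G0 L r (k \<in> S) (l \<in> S) d"
    by (simp add: G0_def comp_def Phi_rot)
  finally show ?thesis by (simp add: d_def)
qed




lemma sum_list_concat: "sum_list (concat xss) = sum_list (map sum_list (xss :: 'a::monoid_add list list))"
  by (induction xss) simp_all

lemma sumlist_upt: "sum_list (map f [0..<n]) = (\<Sum>i<n. f i)"
  by (simp add: interv_sum_list_conv_sum_set_nat lessThan_atLeast0)

lemma edge_sum:
  "(\<Sum>i<length P. \<Sum>j<length P. ennreal (edge_len P i / poly_len P) * ennreal (edge_len P j / poly_len P)
        * Qd r (P ! (i mod length P)) (P ! ((i+1) mod length P)) (P ! (j mod length P)) (P ! ((j+1) mod length P)))
   = sum_list (map (\<lambda>e. sum_list (map (Phi (poly_len P) r e) (edges P))) (edges P))"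
  by (simp add: edges_def sumlist_upt Phi_def edge_len_def comp_def)

lemma poly_len_edges: "poly_len P = sum_list (map (\<lambda>e. dist (fst e) (snd e)) (edges P))"
  by (simp add: edges_def sumlist_upt poly_len_def edge_len_def comp_def)

lemma swap_sl:
  fixes f :: "'a \<Rightarrow> 'b \<Rightarrow> 'c::comm_monoid_add"
  shows "sum_list (map (\<lambda>x. sum_list (map (f x) ys)) xs) = sum_list (map (\<lambda>y. sum_list (map (\<lambda>x. f x y) xs)) ys)"
  by (induction xs) (simp_all add: sum_list_addf)

lemma double_concat:
  fixes \<Phi> :: "'a \<Rightarrow> 'a \<Rightarrow> 'c::comm_monoid_add"
  shows "sum_list (map (\<lambda>e. sum_list (map (\<Phi> e) (concat (map Ed ks)))) (concat (map Ed ks)))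
   = sum_list (map (\<lambda>k. sum_list (map (\<lambda>l. sum_list (map (\<lambda>e. sum_list (map (\<Phi> e) (Ed l))) (Ed k))) ks)) ks)"
proof -
  have inner: "\<And>e. sum_list (map (\<Phi> e) (concat (map Ed ks))) = sum_list (map (\<lambda>l. sum_list (map (\<Phi> e) (Ed l))) ks)"
    by (simp add: map_concat sum_list_concat comp_def)
  have "sum_list (map (\<lambda>e. sum_list (map (\<Phi> e) (concat (map Ed ks)))) (concat (map Ed ks)))
      = sum_list (map (\<lambda>k. sum_list (map (\<lambda>e. sum_list (map (\<lambda>l. sum_list (map (\<Phi> e) (Ed l))) ks)) (Ed k))) ks)"
    by (simp add: inner map_concat sum_list_concat comp_def)
  also have "\<dots> = sum_list (map (\<lambda>k. sum_list (map (\<lambda>l. sum_list (map (\<lambda>e. sum_list (map (\<Phi> e) (Ed l))) (Ed k))) ks)) ks)"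
    by (subst swap_sl) (rule refl)
  finally show ?thesis .
qed

lemma formula_S:
  assumes "edges (curve_vertices S) = concat (map (E S) [0..<8])"
  shows "emeasure (arclen_measure (curve_vertices S) \<Otimes>\<^sub>M arclen_measure (curve_vertices S)) {(x, y). dist x y \<le> r}
     = (\<Sum>k<8. \<Sum>l<8. G0 (poly_len (curve_vertices S)) r (k \<in> S) (l \<in> S) ((l + 8 - k) mod 8))"
  unfolding main_formula edge_sum assms double_concat sumlist_upt
  by (intro sum.cong refl) (simp add: Gs_rot[symmetric] Gs_def)

lemma len_S:
  assumes "edges (curve_vertices S) = concat (map (E S) [0..<8])"
  shows "poly_len (curve_vertices S) = (\<Sum>k<8. sum_list (map (\<lambda>e. dist (fst e) (snd e)) (E0 (k \<in> S))))"
  unfolding poly_len_edges assms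
  by (simp add: map_concat sum_list_concat comp_def sumlist_upt E_rot rp_def dist_rot)

lemma equal_H: "emeasure (arclen_measure (curve_vertices {0,4,5,7}) \<Otimes>\<^sub>M arclen_measure (curve_vertices {0,4,5,7})) {(x, y). dist x y \<le> r}
  = emeasure (arclen_measure (curve_vertices {0,1,4,7}) \<Otimes>\<^sub>M arclen_measure (curve_vertices {0,1,4,7})) {(x, y). dist x y \<le> r}"
proof -
  have L: "poly_len (curve_vertices {0,4,5,7}) = poly_len (curve_vertices {0,1,4,7})"
    unfolding len_S[OF edges1] len_S[OF edges2] by (simp add: lessThan_nat_numeral)
  show ?thesis
    unfolding formula_S[OF edges1] formula_S[OF edges2] L
    by (simp add: lessThan_nat_numeral ac_simps)
qed


lemma norm_octv[simp]: "norm (octv k) = 1" by (simp add: octv_def)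

lemma norm_apex[simp]: "norm (apex k) = 7/5" by (simp add: apex_def norm_mult)

lemma in_poly_set:
  assumes "i \<le> length P"
  shows "P ! (i mod length P) \<in> poly_set P"
proof -
  have "poly_pt P (0 + real i) = seg (P ! (i mod length P)) (P ! ((i+1) mod length P)) 0"
    by (rule poly_pt_shift) simp
  then have "poly_pt P (real i) = P ! (i mod length P)" by (simp add: seg_def)
  moreover have "real i \<in> {0 .. real (length P)}" using assms by simp
  ultimately show ?thesis unfolding poly_set_def by (metis image_eqI)
qed

lemma bound_lemma:
  assumes m: "length P > 0" and b: "\<forall>x\<in>set P. norm x \<le> 7/5"
    and nc: "\<forall>i<length P. norm (P!i) = 7/5 \<longrightarrow> norm (P!((i+1) mod length P)) < 7/5"
    and y: "y \<in> poly_set P"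
  shows "norm y \<le> 7/5 \<and> (norm y = 7/5 \<longrightarrow> y \<in> set P)"
proof -
  obtain s where s: "y = poly_pt P s" using y unfolding poly_set_def by auto
  define i where "i = nat \<lfloor>s\<rfloor>"
  define t where "t = s - of_int \<lfloor>s\<rfloor>"
  define p where "p = P ! (i mod length P)"
  define q where "q = P ! ((i + 1) mod length P)"
  have t: "0 \<le> t" "t < 1" unfolding t_def by linarith+
  have yv: "y = (1 - t) *\<^sub>R p + t *\<^sub>R q"
    unfolding s poly_pt_def Let_def p_def q_def t_def i_def by simp
  have im: "i mod length P < length P" using m by simp
  have pP: "p \<in> set P" unfolding p_def using im by simp
  have qP: "q \<in> set P" unfolding q_def using m by simp
  have np: "norm p \<le> 7/5" and nq: "norm q \<le> 7/5" using b pP qP by auto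
  have ncq: "norm p = 7/5 \<Longrightarrow> norm q < 7/5"
    using nc im unfolding p_def q_def by (metis mod_add_left_eq)
  have tri: "norm y \<le> (1 - t) * norm p + t * norm q"
    unfolding yv using t by (metis abs_of_nonneg diff_ge_0_iff_ge less_imp_le norm_scaleR norm_triangle_ineq)
  have le1: "(1 - t) * norm p \<le> (1 - t) * (7/5)" using np t by (intro mult_left_mono) auto
  have le2: "t * norm q \<le> t * (7/5)" using nq t by (intro mult_left_mono) auto
  have "norm y \<le> 7/5" using tri le1 le2 by (simp add: algebra_simps)
  moreover have "norm y = 7/5 \<longrightarrow> y \<in> set P"
  proof
    assume e: "norm y = 7/5"
    have "norm p = 7/5"
    proof (rule ccontr)
      assume "norm p \<noteq> 7/5"
      then have "norm p < 7/5" using np by simp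
      then have "(1 - t) * norm p < (1 - t) * (7/5)" using t by (intro mult_strict_left_mono) auto
      then show False using tri le2 e by (simp add: algebra_simps)
    qed
    then have "norm q < 7/5" by (rule ncq)
    have "t = 0"
    proof (rule ccontr)
      assume "t \<noteq> 0"
      then have "t * norm q < t * (7/5)" using t \<open>norm q < 7/5\<close> by (intro mult_strict_left_mono) auto
      then show False using tri le1 e by (simp add: algebra_simps)
    qed
    then show "y \<in> set P" using yv pP by simp
  qed
  ultimately show ?thesis by blast
qed

abbreviation "X1 \<equiv> curve_vertices {0,4,5,7}"
abbreviation "Y1 \<equiv> curve_vertices {0,1,4,7}"

lemma Y_list: "Y1 = [octv 0, apex 0, octv 1, apex 1, octv 2, octv 3, octv 4, apex 4, octv 5, octv 6, octv 7, apex 7]"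
  by (simp add: curve_vertices_def u8)

lemma X_list: "X1 = [octv 0, apex 0, octv 1, octv 2, octv 3, octv 4, apex 4, octv 5, apex 5, octv 6, octv 7, apex 7]"
  by (simp add: curve_vertices_def u8)

lemma Y_bound:
  assumes "y \<in> poly_set Y1"
  shows "norm y \<le> 7/5 \<and> (norm y = 7/5 \<longrightarrow> y \<in> {apex 0, apex 1, apex 4, apex 7})"
proof -
  have len: "length Y1 = 12" unfolding Y_list by simp
  have "\<forall>i\<in>set [0..<12]. norm (Y1!i) = 7/5 \<longrightarrow> norm (Y1!((i+1) mod 12)) < 7/5"
    unfolding u12 Y_list by simp
  then have nc: "\<forall>i<length Y1. norm (Y1!i) = 7/5 \<longrightarrow> norm (Y1!((i+1) mod length Y1)) < 7/5"
    unfolding len by simp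
  have h1: "length Y1 > 0" unfolding len by simp
  have h2: "\<forall>x\<in>set Y1. norm x \<le> 7/5" unfolding Y_list by simp
  have "norm y \<le> 7/5 \<and> (norm y = 7/5 \<longrightarrow> y \<in> set Y1)"
    by (rule bound_lemma[OF h1 h2 nc assms])
  then show ?thesis unfolding Y_list by auto
qed

lemma X_apex: "apex 0 \<in> poly_set X1" "apex 4 \<in> poly_set X1" "apex 5 \<in> poly_set X1" "apex 7 \<in> poly_set X1"
  using in_poly_set[of 1 X1] in_poly_set[of 6 X1] in_poly_set[of 8 X1] in_poly_set[of 11 X1]
  by (simp_all add: X_list)


definition ss :: real where "ss = sqrt 2 / 2"

lemma ss_sq: "ss * ss = 1/2" unfolding ss_def by (simp add: power2_eq_square[symmetric] power_divide)
lemma ss_pos: "0 < ss" unfolding ss_def by simp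
lemma ss_lt1: "ss < 1" unfolding ss_def using sqrt2_less_2 by simp

lemma om1: "om = Complex ss ss"
  by (simp add: om_def complex_eq_iff ss_def cos_45 sin_45)

lemma om4: "om ^ 4 = -1"
proof -
  have "om ^ 4 = cis (real 4 * (pi/4))" by (simp add: om_def Complex.DeMoivre)
  then show ?thesis by simp
qed

lemma om5: "om ^ 5 = Complex (-ss) (-ss)"
proof -
  have "om ^ 5 = om ^ 4 * om" by (simp add: power_Suc2[symmetric])
  also have "\<dots> = - om" by (simp add: om4)
  also have "\<dots> = Complex (-ss) (-ss)" by (simp add: om1 complex_eq_iff)
  finally show ?thesis .
qed

lemma om7: "om ^ 7 = Complex ss (-ss)"
proof -
  have c: "om * Complex ss (-ss) = 1" by (simp add: om1 complex_eq_iff ss_sq)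
  have "om ^ 7 = om ^ 7 * (om * Complex ss (-ss))" by (simp add: c)
  also have "\<dots> = om ^ 8 * Complex ss (-ss)" by (simp only: mult.assoc[symmetric] power_Suc2[symmetric] numeral_eq_Suc) simp
  finally show ?thesis by (simp add: om8)
qed

lemma revals0: "Re om = ss" "Im om = ss" "Re (om ^ Suc 0) = ss" "Im (om ^ Suc 0) = ss"
  by (simp_all add: om1)

lemma revals1: "Re (om ^ 4) = -1" "Im (om ^ 4) = 0" "Re (om ^ 5) = -ss" "Im (om ^ 5) = -ss"
  "Re (om ^ 7) = ss" "Im (om ^ 7) = -ss"
  by (simp_all add: om4 om5 om7)

lemmas revals = revals0 revals1

lemma dsq: "(dist (apex j) (apex k))^2 = 49/25 * ((Re (om^j) - Re (om^k))^2 + (Im (om^j) - Im (om^k))^2)"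
proof -
  have "apex j - apex k = (om ^ j - om ^ k) * apex 0" by (simp add: apex_rot[of j] apex_rot[of k] algebra_simps)
  then have e: "dist (apex j) (apex k) = 7/5 * cmod (om ^ j - om ^ k)" by (simp add: dist_norm norm_mult)
  have "(dist (apex j) (apex k))^2 = (7/5)^2 * (cmod (om ^ j - om ^ k))^2" by (simp only: e power_mult_distrib)
  moreover have "(7/5::real)^2 = 49/25" by (simp add: power2_eq_square)
  ultimately show ?thesis by (simp only: cmod_power2 minus_complex.sel)
qed

lemma AY_diam_idx: "\<forall>j\<in>{0,1,4,7::nat}. \<forall>k\<in>{0,1,4,7::nat}. (dist (apex j) (apex k))^2 = 196/25 \<longrightarrow> (j = 0 \<and> k = 4) \<or> (j = 4 \<and> k = 0)"
  unfolding dsq using ss_pos ss_lt1 by (simp add: revals power2_eq_square algebra_simps ss_sq)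

lemma AY_c1_idx: "\<forall>j\<in>{0,1,4,7::nat}. (dist (apex j) (apex 0))^2 \<noteq> (dist (apex 5) (apex 0))^2"
  unfolding dsq using ss_pos ss_lt1 by (simp add: revals power2_eq_square algebra_simps ss_sq)

lemma AY_c2_idx: "\<forall>j\<in>{0,1,4,7::nat}. (dist (apex j) (apex 4))^2 \<noteq> (dist (apex 7) (apex 0))^2"
  unfolding dsq using ss_pos ss_lt1 by (simp add: revals power2_eq_square algebra_simps ss_sq)

lemma d04: "dist (apex 0) (apex 4) = 14/5"
proof -
  have "(dist (apex 0) (apex 4))^2 = (14/5)^2" unfolding dsq by (simp add: revals power2_eq_square)
  then show ?thesis by (rule power2_eq_imp_eq) simp_all
qed

lemma apex4: "apex 4 = - apex 0" by (simp add: apex_rot[of 4] om4)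


lemma para: "(norm (x - y))^2 + (norm (x + y))^2 = 2 * (norm x)^2 + 2 * (norm (y::complex))^2"
  by (simp only: cmod_power2) (simp add: power2_eq_square algebra_simps)

lemma nrm:
  fixes b b0 a :: complex
  assumes "dist b b0 = dist a (apex 0)" "dist b (-b0) = dist a (apex 4)" "norm b0 = 7/5" "norm a = 7/5"
  shows "norm b = 7/5"
proof -
  have "(dist b b0)^2 + (dist b (-b0))^2 = 2 * (norm b)^2 + 2 * (norm b0)^2"
    using para[of b b0] by (simp add: dist_norm)
  moreover have "(dist a (apex 0))^2 + (dist a (apex 4))^2 = 2 * (norm a)^2 + 2 * (norm (apex 0))^2"
    using para[of a "apex 0"] by (simp add: dist_norm apex4)
  ultimately have "(norm b)^2 = (7/5)^2" using assms by simp
  then show ?thesis by (rule power2_eq_imp_eq) simp_all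
qed

lemma AYD: "y \<in> poly_set Y1 \<Longrightarrow> norm y = 7/5 \<Longrightarrow> \<exists>j\<in>{0,1,4,7::nat}. y = apex j"
  using Y_bound by blast

lemma no_iso: "\<not> (\<exists>f :: complex \<Rightarrow> complex. (\<forall>x y. dist (f x) (f y) = dist x y) \<and>
              f ` poly_set X1 = poly_set Y1)"
proof
  assume "\<exists>f :: complex \<Rightarrow> complex. (\<forall>x y. dist (f x) (f y) = dist x y) \<and> f ` poly_set X1 = poly_set Y1"
  then obtain f :: "complex \<Rightarrow> complex" where iso: "\<And>x y. dist (f x) (f y) = dist x y"
    and img: "f ` poly_set X1 = poly_set Y1" by blast
  have inY: "\<And>x. x \<in> poly_set X1 \<Longrightarrow> f x \<in> poly_set Y1" using img by blast
  have Y0: "f (apex 0) \<in> poly_set Y1" and Y4: "f (apex 4) \<in> poly_set Y1"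
    and Y5: "f (apex 5) \<in> poly_set Y1" and Y7: "f (apex 7) \<in> poly_set Y1"
    using inY X_apex by auto
  have nb0: "norm (f (apex 0)) \<le> 7/5" using Y_bound[OF Y0] by simp
  have nb4: "norm (f (apex 4)) \<le> 7/5" using Y_bound[OF Y4] by simp
  have d: "dist (f (apex 0)) (f (apex 4)) = 14/5" using iso d04 by simp
  have "dist (f (apex 0)) (f (apex 4)) \<le> norm (f (apex 0)) + norm (f (apex 4))"
    by (simp add: dist_norm norm_triangle_ineq4)
  then have e0: "norm (f (apex 0)) = 7/5" and e4: "norm (f (apex 4)) = 7/5" using d nb0 nb4 by linarith+
  obtain j where j: "j \<in> {0,1,4,7::nat}" "f (apex 0) = apex j" using AYD[OF Y0 e0] by blast
  obtain k where k: "k \<in> {0,1,4,7::nat}" "f (apex 4) = apex k" using AYD[OF Y4 e4] by blast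
  have "dist (apex j) (apex k) = 14/5" using d j k by simp
  then have "(dist (apex j) (apex k))^2 = (14/5)^2" by (simp only:)
  then have "(dist (apex j) (apex k))^2 = 196/25" by (simp add: power2_eq_square)
  moreover have "(dist (apex j) (apex k))^2 = 196/25 \<longrightarrow> (j = 0 \<and> k = 4) \<or> (j = 4 \<and> k = 0)"
    by (rule bspec[OF bspec[OF AY_diam_idx j(1)] k(1)])
  ultimately have jk: "(j = 0 \<and> k = 4) \<or> (j = 4 \<and> k = 0)" by (rule mp[rotated])
  have neg: "f (apex 4) = - f (apex 0)" using jk j k by (auto simp: apex4)
  have n5: "norm (f (apex 5)) = 7/5"
    by (rule nrm[of "f (apex 5)" "f (apex 0)" "apex 5"]) (simp_all add: iso e0 neg[symmetric])
  have n7: "norm (f (apex 7)) = 7/5"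
    by (rule nrm[of "f (apex 7)" "f (apex 0)" "apex 7"]) (simp_all add: iso e0 neg[symmetric])
  obtain i5 where i5: "i5 \<in> {0,1,4,7::nat}" "f (apex 5) = apex i5" using AYD[OF Y5 n5] by blast
  obtain i7 where i7: "i7 \<in> {0,1,4,7::nat}" "f (apex 7) = apex i7" using AYD[OF Y7 n7] by blast
  from jk show False
  proof
    assume "j = 0 \<and> k = 4"
    then have "dist (apex i5) (apex 0) = dist (apex 5) (apex 0)"
      using iso[of "apex 5" "apex 0"] i5 j by simp
    then show False using AY_c1_idx i5 by auto
  next
    assume "j = 4 \<and> k = 0"
    then have "dist (apex i7) (apex 4) = dist (apex 7) (apex 0)"
      using iso[of "apex 7" "apex 0"] i7 j by simp
    then show False using AY_c2_idx i7 by auto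
  qed
qed


theorem proposition5p4:
  shows "\<not> (\<exists>f :: complex \<Rightarrow> complex. (\<forall>x y. dist (f x) (f y) = dist x y) \<and>
              f ` poly_set (curve_vertices {0, 4, 5, 7}) = poly_set (curve_vertices {0, 1, 4, 7}))
         \<and> (\<forall>r \<ge> 0. dist_distr (arclen_measure (curve_vertices {0, 4, 5, 7})) r
                    = dist_distr (arclen_measure (curve_vertices {0, 1, 4, 7})) r)"
proof
  show "\<not> (\<exists>f :: complex \<Rightarrow> complex. (\<forall>x y. dist (f x) (f y) = dist x y) \<and>
              f ` poly_set (curve_vertices {0, 4, 5, 7}) = poly_set (curve_vertices {0, 1, 4, 7}))"
    by (rule no_iso)
  show "\<forall>r \<ge> 0. dist_distr (arclen_measure (curve_vertices {0, 4, 5, 7})) r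
                    = dist_distr (arclen_measure (curve_vertices {0, 1, 4, 7})) r"
    unfolding dist_distr_def measure_def using equal_H by simp
qed

end
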